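(* Let $(S,\wedge,\vee)$ be a skew lattice. For all $x,y,z\in S$, \[ (x\lfloor y\rfloor)\lfloor\, y\lfloor z\rfloor\,\rfloor = x\lfloor\, y\lfloor z\rfloor\,\rfloor . \]
   Context: A skew lattice is a set $S$ with two binary operations $\wedge,\vee$, each idempotent and associative, satisfying the absorption laws $x\wedge(x\vee y)=x=x\vee(x\wedge y)$ and $(x\wedge y)\vee y=y=(x\vee y)\wedge y$ for all $x,y\in S$. For $x,y$ in a skew lattice, the lower update of $x$ by $y$ is $x\lfloor y\rfloor=(y\wedge x\wedge y)\vee x\vee(y\wedge x\wedge y)$. *)

theory Defs
  imports Main
begin

definition skew_lattice :: "'a set \<Rightarrow> ('a \<Rightarrow> 'a \<Rightarrow> 'a) \<Rightarrow> ('a \<Rightarrow> 'a \<Rightarrow> 'a) \<Rightarrow> bool" where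
  "skew_lattice S meet join \<longleftrightarrow>
     (\<forall>x\<in>S. \<forall>y\<in>S. meet x y \<in> S \<and> join x y \<in> S) \<and>
     (\<forall>x\<in>S. meet x x = x \<and> join x x = x) \<and>
     (\<forall>x\<in>S. \<forall>y\<in>S. \<forall>z\<in>S. meet (meet x y) z = meet x (meet y z) \<and>
                          join (join x y) z = join x (join y z)) \<and>
     (\<forall>x\<in>S. \<forall>y\<in>S. meet x (join x y) = x \<and> join x (meet x y) = x \<and>
                    join (meet x y) y = y \<and> meet (join x y) y = y)"

definition lower_update :: "('a \<Rightarrow> 'a \<Rightarrow> 'a) \<Rightarrow> ('a \<Rightarrow> 'a \<Rightarrow> 'a) \<Rightarrow> 'a \<Rightarrow> 'a \<Rightarrow> 'a" where
  "lower_update meet join x y =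
     join (join (meet (meet y x) y) x) (meet (meet y x) y)"

end

theory Submission imports Defs begin
locale skt = fixes m :: "'a \<Rightarrow> 'a \<Rightarrow> 'a" and j :: "'a \<Rightarrow> 'a \<Rightarrow> 'a"
  assumes mi: "m x x = x" and ji: "j x x = x"
  and ma: "m (m x y) z = m x (m y z)"
  and ja: "j (j x y) z = j x (j y z)"
  and a1: "m x (j x y) = x"
  and a2: "j x (m x y) = x"
  and a3: "j (m x y) y = y"
  and a4: "m (j x y) y = y"
begin
lemma r1:
  shows "m (m (m (m a b) a) c) a = m (m (m a b) c) a"
proof -
  have c_0_14: "\<And>x1 x2. (m x1 (m x1 x2)) = (m x1 x2)"
    by (metis a4 a2 ma ja )
  have c_0_15: "\<And>x1 x2. (j x1 (j x2 (j x1 x2))) = (j x1 x2)"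
    by (metis ji ja ma )
  have c_0_17: "\<And>x1 x2 x3. (m x1 (m x2 (m x1 (m x2 x3)))) = (m x1 (m x2 x3))"
    by (metis ma c_0_14 ja )
  have c_0_18: "\<And>x1 x2. (j x1 (j (m x1 x2) x1)) = x1"
    by (metis c_0_15 a2 ma ja )
  have c_0_20: "\<And>x1 x2 x3. (j x1 (j (m x1 x2) x3)) = (j x1 x3)"
    by (metis ja a2 ma )
  have c_0_21: "\<And>x1 x2 x3. (m x1 (m (j x1 x2) x3)) = (m x1 x3)"
    by (metis ma a1 ja )
  have c_0_22: "\<And>x1 x2 x3. (m x1 (m (j x2 x3) (m x1 x3))) = (m x1 x3)"
    by (metis c_0_17 a4 ma ja )
  have c_0_23: "\<And>x1 x2. (m x1 (j (m x1 x2) x1)) = (j (m x1 x2) x1)"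
    by (metis a4 c_0_18 ma ja )
  have c_0_24: "\<And>x1 x2 x3. (j (m x1 x2) (j x2 x3)) = (j x2 x3)"
    by (metis ja a3 ma )
  have c_0_25: "\<And>x1 x2 x3. (j x1 (j x2 (j (m x1 x3) x2))) = (j x1 x2)"
    by (metis c_0_20 c_0_15 ma ja )
  have c_0_26: "\<And>x1 x2 x3. (m x1 (m x2 (j (m x1 x2) x3))) = (m x1 x2)"
    by (metis a1 ma ja )
  have c_0_27: "\<And>x1 x2 x3 x4. (m x1 (m (j x2 x3) (m (j x1 x4) x3))) = (m x1 x3)"
    by (metis c_0_21 c_0_22 ma ja )
  have c_0_28: "\<And>x1 x2 x3. (m x1 (m (j (m x1 x2) x1) x3)) = (m (j (m x1 x2) x1) x3)"
    by (metis ma c_0_23 ja )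
  have c_0_30: "\<And>x1 x2 x3. (m (j x1 x2) (j x1 (j x2 x3))) = (j x1 x2)"
    by (metis a1 ja ma )
  have c_0_31: "\<And>x1 x2 x3. (j x1 (j (m x2 (m x1 x3)) x1)) = x1"
    by (metis c_0_24 c_0_25 a3 ma ja )
  have c_0_32: "\<And>x1 x2 x3 x4. (m x1 (m x2 (j (m (j x1 x3) x2) x4))) = (m x1 x2)"
    by (metis c_0_21 c_0_26 ma ja )
  have c_0_33: "\<And>x1 x2 x3. (m (j (m x1 x2) x1) (m (j x1 x3) x1)) = x1"
    by (metis c_0_27 c_0_28 mi ma ja )
  have c_0_34: "\<And>x1 x2 x3. (m (j x1 (m x2 (m x1 x3))) x1) = (j x1 (m x2 (m x1 x3)))"
    by (metis c_0_30 c_0_31 ma ja )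
  have c_0_35: "\<And>x1 x2 x3. (m x1 (j (m (j x1 x2) x1) x3)) = x1"
    by (metis c_0_14 c_0_32 mi ma ja )
  have c_0_37: "\<And>x1 x2 x3. (m x1 (m x2 (m (j x1 x3) x1))) = (m x1 (m x2 x1))"
    by (metis c_0_21 c_0_33 ma ja )
  have c_0_38: "\<And>x1 x2. (m (j x1 (m x2 x1)) x1) = (j x1 (m x2 x1))"
    by (metis c_0_34 c_0_35 ma ja )
  have c_0_40: "\<And>x1 x2 x3. (m x1 (m x2 (j x1 (m x3 x1)))) = (m x1 (m x2 x1))"
    by (metis c_0_37 c_0_38 ma ja )
  have c_0_42: "\<And>x1 x2 x3 x4. (m x1 (m x2 (m (j x1 (m x3 x1)) x4))) = (m x1 (m x2 (m x1 x4)))"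
    by (metis ma c_0_40 ja )
  have c_0_44: "\<And>x1 x2 x3. (m x1 (m x2 (m x1 (m x3 x1)))) = (m x1 (m x2 (m x3 x1)))"
    by (metis c_0_42 a4 ma ja )
  show ?thesis by (metis c_0_44 ma )
qed

lemma r2:
  shows "j (j (j (j a b) a) c) a = j (j (j a b) c) a"
proof -
  have c_0_14: "\<And>x1 x2. (j x1 (j x1 x2)) = (j x1 x2)"
    by (metis a3 a1 ma ja )
  have c_0_15: "\<And>x1 x2. (m x1 (m x2 (m x1 x2))) = (m x1 x2)"
    by (metis mi ma ja )
  have c_0_17: "\<And>x1 x2 x3. (j x1 (j x2 (j x1 (j x2 x3)))) = (j x1 (j x2 x3))"
    by (metis ja c_0_14 ma )
  have c_0_18: "\<And>x1 x2. (m x1 (m (j x1 x2) x1)) = x1"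
    by (metis c_0_15 a1 ma ja )
  have c_0_20: "\<And>x1 x2 x3. (m x1 (m (j x1 x2) x3)) = (m x1 x3)"
    by (metis ma a1 ja )
  have c_0_22: "\<And>x1 x2 x3. (j x1 (j (m x1 x2) x3)) = (j x1 x3)"
    by (metis ja a2 ma )
  have c_0_23: "\<And>x1 x2 x3. (j x1 (j (m x2 x3) (j x1 x3))) = (j x1 x3)"
    by (metis c_0_17 a3 ma ja )
  have c_0_24: "\<And>x1 x2. (j x1 (m (j x1 x2) x1)) = (m (j x1 x2) x1)"
    by (metis a3 c_0_18 ma ja )
  have c_0_25: "\<And>x1 x2 x3. (m (j x1 x2) (m x2 x3)) = (m x2 x3)"
    by (metis ma a4 ja )
  have c_0_26: "\<And>x1 x2 x3. (m x1 (m x2 (m (j x1 x3) x2))) = (m x1 x2)"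
    by (metis c_0_20 c_0_15 ma ja )
  have c_0_27: "\<And>x1 x2. (j x1 (j x2 (j x1 x2))) = (j x1 x2)"
    by (metis ji ja ma )
  have c_0_28: "\<And>x1 x2 x3 x4. (j x1 (j (m x2 x3) (j (m x1 x4) x3))) = (j x1 x3)"
    by (metis c_0_22 c_0_23 ma ja )
  have c_0_29: "\<And>x1 x2 x3. (j x1 (j (m (j x1 x2) x1) x3)) = (j (m (j x1 x2) x1) x3)"
    by (metis ja c_0_24 ma )
  have c_0_30: "\<And>x1 x2 x3. (j (m x1 x2) (m x1 (m x2 x3))) = (m x1 x2)"
    by (metis a2 ma ja )
  have c_0_31: "\<And>x1 x2 x3. (m x1 (m (j x2 (j x1 x3)) x1)) = x1"
    by (metis c_0_25 c_0_26 a4 ja ma )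
  have c_0_32: "\<And>x1 x2 x3. (j (m x1 x2) (j x2 x3)) = (j x2 x3)"
    by (metis ja a3 ma )
  have c_0_33: "\<And>x1 x2 x3. (j x1 (j x2 (j (m x1 x3) x2))) = (j x1 x2)"
    by (metis c_0_22 c_0_27 ma ja )
  have c_0_34: "\<And>x1 x2 x3. (j (m (j x1 x2) x1) (j (m x1 x3) x1)) = x1"
    by (metis c_0_28 c_0_29 ji ma ja )
  have c_0_35: "\<And>x1 x2 x3. (j (m x1 (j x2 (j x1 x3))) x1) = (m x1 (j x2 (j x1 x3)))"
    by (metis c_0_30 c_0_31 ma ja )
  have c_0_36: "\<And>x1 x2 x3. (j x1 (j (m x2 (m x1 x3)) x1)) = x1"
    by (metis c_0_32 c_0_33 a3 ma ja )
  have c_0_38: "\<And>x1 x2 x3. (j x1 (j x2 (j (m x1 x3) x1))) = (j x1 (j x2 x1))"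
    by (metis c_0_22 c_0_34 ja ma )
  have c_0_39: "\<And>x1 x2. (j (m x1 (j x2 x1)) x1) = (m x1 (j x2 x1))"
    by (metis c_0_35 c_0_36 ma ja )
  have c_0_41: "\<And>x1 x2 x3. (j x1 (j x2 (m x1 (j x3 x1)))) = (j x1 (j x2 x1))"
    by (metis c_0_38 c_0_39 ma ja )
  have c_0_43: "\<And>x1 x2 x3 x4. (j x1 (j x2 (j (m x1 (j x3 x1)) x4))) = (j x1 (j x2 (j x1 x4)))"
    by (metis ja c_0_41 ma )
  have c_0_45: "\<And>x1 x2 x3. (j x1 (j x2 (j x1 (j x3 x1)))) = (j x1 (j x2 (j x3 x1)))"
    by (metis c_0_43 a3 ma ja )
  show ?thesis by (metis c_0_45 ja )
qed

lemma q:
  assumes "m (m a b) a = a"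
  shows "j (j b a) b = b"
proof -
  have c_0_10: "(m (m a b) a) = a"
    using assms by (metis ma ja )
  have c_0_11: "\<And>x1 x2 x3. (j (m x1 x2) (m x1 (m x2 x3))) = (m x1 x2)"
    using assms by (metis a2 ma ja )
  have c_0_12: "(m a (m b a)) = a"
    using assms by (metis c_0_10 ma ja )
  have c_0_14: "(j (m a b) a) = (m a b)"
    using assms by (metis c_0_11 c_0_12 ma ja )
  have c_0_16: "\<And>x1. (j (m a b) (j a x1)) = (j (m a b) x1)"
    using assms by (metis ja c_0_14 ma )
  have c_0_17: "\<And>x1. (m (j (m a b) x1) (j a x1)) = (j a x1)"
    using assms by (metis a4 c_0_16 ma ja )
  have c_0_20: "(m b (j a b)) = (j a b)"
    using assms by (metis c_0_17 a3 ma ja )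
  show ?thesis using assms by (metis a2 c_0_20 ja )
qed

lemma qp:
  assumes "j (j b a) b = b"
  shows "m (m a b) a = a"
proof -
  have c_0_8: "(j (j b a) b) = b"
    using assms by (metis ma ja )
  have c_0_13: "(j b (j a b)) = b"
    using assms by (metis c_0_8 ja ma )
  have c_0_14: "\<And>x1 x2 x3. (j (m x1 x2) (m x1 (m x2 x3))) = (m x1 x2)"
    using assms by (metis a2 ma ja )
  have c_0_15: "(m b (j a b)) = (j a b)"
    using assms by (metis a4 c_0_13 ma ja )
  have c_0_16: "\<And>x1. (j (m x1 b) (m x1 (j a b))) = (m x1 b)"
    using assms by (metis c_0_14 c_0_15 ma ja )
  have c_0_19: "(j (m a b) a) = (m a b)"
    using assms by (metis c_0_16 a1 ma ja )
  show ?thesis using assms by (metis a4 c_0_19 ma )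
qed

lemmas r1' = r1[simplified ma] and r2' = r2[simplified ja]

lemma A1:
  shows "m (m (j (j (m (m y x) y) x) (m (m y x) y)) x) (j (j (m (m y x) y) x) (m (m y x) y)) = j (j (m (m y x) y) x) (m (m y x) y)"
proof -
  have c_0_13: "\<And>x1 x2. (j (j x2 x1) x2) = x2 \<or> (m (m x1 x2) x1) \<noteq> x1"
    by (metis q ma ja )
  have c_0_18: "\<And>x1 x2. (j (j x2 x1) x2) = x2 \<or> (m (m x1 x2) x1) \<noteq> x1"
    by (metis c_0_13 ma ja )
  have c_0_21: "\<And>x1 x2 x3. (j (m x1 x2) (j x2 x3)) = (j x2 x3)"
    by (metis ja a3 ma )
  have c_0_22: "\<And>x1 x2 x3. (j (m x1 x2) (j x3 (j (m x1 x2) x1))) = (j (m x1 x2) (j x3 x1))"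
    by (metis r2 a2 ma ja )
  have c_0_24: "\<And>x1 x2. (j x1 (j x2 x1)) = x1 \<or> (m x2 (m x1 x2)) \<noteq> x2"
    by (metis c_0_18 ja ma )
  have c_0_25: "\<And>x1 x2. (m x1 (m x1 x2)) = (m x1 x2)"
    by (metis a4 a2 ma ja )
  have c_0_26: "\<And>x1 x2 x3. (j (m x1 x2) (m x1 (m x2 x3))) = (m x1 x2)"
    by (metis a2 ma ja )
  have c_0_27: "\<And>x1 x2. (j x1 (j (m x2 x1) x2)) = (j x1 x2)"
    by (metis c_0_21 c_0_22 ma ja )
  have c_0_28: "\<And>x1 x2. (m x1 (m x2 (m x1 x2))) = (m x1 x2)"
    by (metis mi ma ja )
  have c_0_29: "\<And>x1 x2 x3. (m (j x1 (j x2 x3)) x3) = x3"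
    by (metis a4 ja ma )
  have c_0_30: "\<And>x1 x2. (j (m x1 x2) x1) = (m x1 x2) \<or> (m x1 (m x2 x1)) \<noteq> x1"
    by (metis c_0_24 a2 ma c_0_25 ja )
  have c_0_31: "\<And>x1 x2 x3 x4. (j (m x1 x2) (j (m x1 (m x2 x3)) x4)) = (j (m x1 x2) x4)"
    by (metis ja c_0_26 ma )
  have c_0_32: "\<And>x1 x2. (j (m x1 (m x2 x1)) x2) = (j (m x2 x1) x2)"
    by (metis c_0_27 c_0_28 c_0_21 ma ja )
  have c_0_33: "\<And>x1 x2 x3. (m (j x1 x2) (m x3 x2)) = x2 \<or> (m (j x1 x2) (m x3 (j x1 x2))) \<noteq> (j x1 x2)"
    by (metis c_0_29 c_0_30 ma ja )
  have c_0_34: "\<And>x1 x2 x3 x4. (m (j x1 (j x2 x3)) (m x3 x4)) = (m x3 x4)"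
    by (metis ma c_0_29 ja )
  have c_0_38: "\<And>x1 x2. (j (m x1 x2) (j (m x2 x1) x2)) = x2"
    by (metis c_0_31 c_0_32 a3 ma ja )
  have c_0_39: "\<And>x1 x2 x3. (m x1 (j x2 x1)) = (j x2 x1) \<or> (m x1 (j x3 (j x2 x1))) \<noteq> (j x3 (j x2 x1))"
    by (metis c_0_33 c_0_34 ma ja )
  have c_0_40: "\<And>x1 x2 x3. (m (j x1 x2) (m x2 x3)) = (m x2 x3)"
    by (metis ma a4 ja )
  have c_0_41: "\<And>x1 x2 x3. (m (j x1 x2) (m x3 (m (j x1 x2) x1))) = (m (j x1 x2) (m x3 x1))"
    by (metis r1 a1 ma ja )
  have c_0_44: "\<And>x1 x2. (m (m x2 x1) x2) = x2 \<or> (j (j x1 x2) x1) \<noteq> x1"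
    by (metis qp ma ja )
  have c_0_45: "\<And>x1 x2 x3. (j x1 (j (m x1 x2) x3)) = (j x1 x3)"
    by (metis ja a2 ma )
  have c_0_46: "\<And>x1 x2. (j (m x1 x2) (m x2 x1)) = (m x2 (m x1 x2))"
    by (metis c_0_38 c_0_28 ma c_0_26 ja )
  have c_0_47: "\<And>x1 x2 x3. (m x1 (m x2 x1)) = x1 \<or> (m x1 (m x2 (j x3 x1))) \<noteq> (j x3 x1)"
    by (metis c_0_39 a2 ma ja )
  have c_0_48: "\<And>x1 x2 x3. (m x1 (m (j x1 x2) x3)) = (m x1 x3)"
    by (metis ma a1 ja )
  have c_0_49: "\<And>x1 x2. (m x1 (m (j x2 x1) x2)) = (m x1 x2)"
    by (metis c_0_40 c_0_41 ma ja )
  have c_0_50: "\<And>x1 x2. (j x1 (j x2 (j x1 x2))) = (j x1 x2)"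
    by (metis ji ja ma )
  have c_0_52: "\<And>x1 x2. (m (m x2 x1) x2) = x2 \<or> (j (j x1 x2) x1) \<noteq> x1"
    by (metis c_0_44 ma ja )
  have c_0_53: "\<And>x1 x2. (j x1 (m x2 (m x1 x2))) = (j x1 (m x2 x1))"
    by (metis c_0_45 c_0_46 ma ja )
  have c_0_54: "\<And>x1 x2. (m x1 (m x2 x1)) = x1 \<or> (j x2 x1) \<noteq> (m x1 x2)"
    by (metis c_0_47 a1 ma ja )
  have c_0_55: "\<And>x1 x2 x3 x4. (m (j x1 x2) (m (j x1 (j x2 x3)) x4)) = (m (j x1 x2) x4)"
    by (metis c_0_48 ja ma )
  have c_0_56: "\<And>x1 x2. (m (j x1 (j x2 x1)) x2) = (m (j x2 x1) x2)"
    by (metis c_0_49 c_0_50 c_0_40 ma ja )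
  have c_0_58: "\<And>x1 x2. (m x1 (m x2 x1)) = x1 \<or> (j x2 (j x1 x2)) \<noteq> x2"
    by (metis c_0_52 ma ja )
  have c_0_59: "\<And>x1 x2. (j x1 (m x2 x1)) = (j x1 x2) \<or> (j x1 x2) \<noteq> (m x2 x1)"
    by (metis c_0_53 c_0_54 ma ja )
  have c_0_60: "\<And>x1 x2. (m (j x1 x2) (m (j x2 x1) x2)) = x2"
    by (metis c_0_55 c_0_56 a4 ma ja )
  have c_0_61: "\<And>x1 x2 x3. (m (j x1 x2) (j x1 (j x2 x3))) = (j x1 x2)"
    by (metis a1 ja ma )
  have c_0_63: "\<And>x1 x2. (m x1 (m x2 x1)) = x1 \<or> (j x1 x2) \<noteq> (m x2 x1)"
    by (metis c_0_58 c_0_59 ma mi c_0_21 ja )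
  have c_0_64: "\<And>x1 x2. (m (j x1 x2) (j x2 x1)) = (j x2 (j x1 x2))"
    by (metis c_0_60 c_0_50 ja c_0_61 ma )
  have c_0_65: "\<And>x1 x2. (m x1 (j x2 x1)) = (j x2 x1) \<or> (j x1 (j x2 x1)) \<noteq> x1"
    by (metis c_0_58 c_0_40 ja ji ma )
  have c_0_67: "\<And>x1 x2. (m (j x1 (m x2 x1)) (j (m x1 x2) x1)) = (j (m x2 (m x1 x2)) (j x1 (m x2 x1)))"
    by (metis c_0_64 c_0_32 c_0_53 ma ja )
  have c_0_68: "\<And>x1 x2. (m x1 (j (m x1 x2) x1)) = (j (m x1 x2) x1)"
    by (metis c_0_65 c_0_45 ji ma ja )
  show ?thesis by (metis a3 c_0_32 c_0_48 c_0_53 c_0_63 c_0_67 c_0_68 ja ji ma )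
qed

lemma A2:
  shows "m (m x (j (j (m (m y x) y) x) (m (m y x) y))) x = x"
proof -
  have c_0_14: "\<And>x1 x2 x3. (m (j x1 x2) (m x2 x3)) = (m x2 x3)"
    by (metis ma a4 ja )
  have c_0_15: "\<And>x1 x2 x3. (m (j x1 x2) (m x3 (m (j x1 x2) x1))) = (m (j x1 x2) (m x3 x1))"
    by (metis r1 a1 ma ja )
  have c_0_19: "\<And>x1 x2. (m x1 (m (j x2 x1) x2)) = (m x1 x2)"
    by (metis c_0_14 c_0_15 ma ja )
  have c_0_20: "\<And>x1 x2. (j x1 (j x2 (j x1 x2))) = (j x1 x2)"
    by (metis ji ja ma )
  have c_0_22: "\<And>x1 x2. (m (j x1 (j x2 x1)) x2) = (m (j x2 x1) x2)"
    by (metis c_0_19 c_0_20 c_0_14 ma ja )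
  have c_0_23: "\<And>x1 x2 x3. (m x1 (m (j x1 x2) x3)) = (m x1 x3)"
    by (metis ma a1 ja )
  show ?thesis by (metis c_0_22 c_0_23 ja ma mi )
qed

lemma B0:
  shows "m (m (m y x) y) (j (j (m (m y x) y) x) (m (m y x) y)) = m (m y x) y \<and> m (j (j (m (m y x) y) x) (m (m y x) y)) (m (m y x) y) = m (m y x) y"
proof -
  show ?thesis by (metis a1 a4 ja ma )
qed

lemma B1:
  assumes "m (m a x) a = a" and "m (m x a) x = x" and "m (m (m y x) y) a = m (m y x) y" and "m a (m (m y x) y) = m (m y x) y"
  shows "m (m y a) y = m (m y x) y"
proof -
  have c_0_8: "(m a (m (m y x) y)) = (m (m y x) y)"
    using assms by (metis ma ja )
  have c_0_10: "(m a (m y (m x y))) = (m y (m x y))"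
    using assms by (metis c_0_8 ma ja )
  have c_0_12: "\<And>x1. (m a (m y (m x (m y x1)))) = (m y (m x (m y x1)))"
    using assms by (metis ma c_0_10 ja )
  have c_0_13: "\<And>x1 x2. (m x1 (m x2 (m x1 x2))) = (m x1 x2)"
    using assms by (metis mi ma ja )
  have c_0_14: "(m (m a x) a) = a"
    using assms by (metis ma ja )
  have c_0_15: "(m a (m y x)) = (m y x)"
    using assms by (metis c_0_12 c_0_13 ma ja )
  have c_0_17: "(m a (m x a)) = a"
    using assms by (metis c_0_14 ma ja )
  have c_0_18: "(m (m (m y x) y) a) = (m (m y x) y)"
    using assms by (metis ma ja )
  have c_0_19: "\<And>x1. (m a (m y (m x x1))) = (m y (m x x1))"
    using assms by (metis ma c_0_15 ja )
  have c_0_20: "\<And>x1. (m a (m x1 (m x a))) = (m a (m x1 a))"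
    using assms by (metis r1 c_0_17 ma ja )
  have c_0_23: "(m y (m x (m y a))) = (m y (m x y))"
    using assms by (metis c_0_18 ma ja )
  have c_0_24: "(m a (m y a)) = (m y (m x a))"
    using assms by (metis c_0_19 c_0_20 ma ja )
  have c_0_25: "\<And>x1 x2. (m x1 (m x1 x2)) = (m x1 x2)"
    using assms by (metis a4 a2 ma ja )
  have c_0_26: "\<And>x1. (m y (m x (m y (m a x1)))) = (m y (m x (m y x1)))"
    using assms by (metis ma c_0_23 ja )
  have c_0_27: "(m y (m x a)) = (m y a)"
    using assms by (metis c_0_13 c_0_24 c_0_25 ma ja )
  have c_0_29: "(m y (m x (m a y))) = (m y (m x y))"
    using assms by (metis r1 c_0_26 mi ma ja )
  have c_0_30: "\<And>x1. (m y (m x (m a x1))) = (m y (m a x1))"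
    using assms by (metis ma c_0_27 ja )
  show ?thesis using assms by (metis c_0_29 c_0_30 ja ma )
qed

lemma D:
  assumes "m (m w y) w = w" and "m (m y w) y = y" and "m (m y a) y = m (m y x) y"
  shows "m (m w a) w = m (m w x) w"
proof -
  have c_0_5: "(m (m w y) w) = w"
    using assms by (metis ma ja )
  have c_0_7: "(m w (m y w)) = w"
    using assms by (metis c_0_5 ma ja )
  have c_0_8: "\<And>x1. (m w (m y (m w x1))) = (m w x1)"
    using assms by (metis ma c_0_7 ja )
  have c_0_10: "(m (m y a) y) = (m (m y x) y)"
    using assms by (metis ma ja )
  have c_0_11: "\<And>x1. (m w (m y (m x1 y))) = (m w (m x1 y))"
    using assms by (metis c_0_8 r1 ma ja )
  have c_0_12: "(m y (m a y)) = (m y (m x y))"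
    using assms by (metis c_0_10 ma ja )
  have c_0_13: "(m w (m a y)) = (m w (m x y))"
    using assms by (metis c_0_11 c_0_12 ma ja )
  have c_0_15: "\<And>x1. (m w (m x1 (m y w))) = (m w (m x1 w))"
    using assms by (metis r1 c_0_7 ma ja )
  have c_0_16: "\<And>x1. (m w (m a (m y x1))) = (m w (m x (m y x1)))"
    using assms by (metis ma c_0_13 ja )
  show ?thesis using assms by (metis c_0_15 c_0_16 ja ma )
qed

lemma E1:
  assumes "m (m w y) w = w" and "m (m y w) y = y"
  shows "m (m (m (m y x) y) (m (m w x) w)) (m (m y x) y) = m (m y x) y"
proof -
  have c_0_8: "(m (m w y) w) = w"
    using assms by (metis ma ja )
  have c_0_10: "(m (m y w) y) = y"
    using assms by (metis ma ja )
  have c_0_11: "(m w (m y w)) = w"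
    using assms by (metis c_0_8 ma ja )
  have c_0_13: "(m y (m w y)) = y"
    using assms by (metis c_0_10 ma ja )
  have c_0_14: "\<And>x1. (m w (m y (m w x1))) = (m w x1)"
    using assms by (metis ma c_0_11 ja )
  have c_0_19: "\<And>x1 x2 x3 x4. (m x1 (m x2 (m x3 (m x1 (m x2 (m x4 (m x1 x2))))))) = (m x1 (m x2 (m x3 (m x4 (m x1 x2)))))"
    using assms by (metis ma r1 ja )
  have c_0_20: "\<And>x1. (m y (m x1 (m w y))) = (m y (m x1 y))"
    using assms by (metis r1 c_0_13 ma ja )
  have c_0_21: "\<And>x1. (m w (m y (m x1 y))) = (m w (m x1 y))"
    using assms by (metis c_0_14 r1 ma ja )
  have c_0_22: "\<And>x1 x2. (m x1 (m x1 x2)) = (m x1 x2)"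
    using assms by (metis a4 a2 ma ja )
  have c_0_24: "\<And>x1 x2. (m x1 (m x2 (m x1 x2))) = (m x1 x2)"
    using assms by (metis mi ma ja )
  have c_0_25: "\<And>x1. (m w (m x1 (m w y))) = (m w (m x1 y))"
    using assms by (metis c_0_14 c_0_19 c_0_20 c_0_21 c_0_22 ma ja )
  have c_0_26: "\<And>x1. (m y (m w (m y x1))) = (m y x1)"
    using assms by (metis ma c_0_13 ja )
  have c_0_28: "\<And>x1. (m w (m x1 (m w (m x1 y)))) = (m w (m x1 y))"
    using assms by (metis c_0_24 c_0_25 ma c_0_14 ja )
  have c_0_29: "\<And>x1. (m y (m w (m x1 y))) = (m y (m x1 y))"
    using assms by (metis c_0_26 r1 ma ja )
  show ?thesis using assms by (metis c_0_21 c_0_24 c_0_28 c_0_29 ja ma )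
qed

lemma F:
  assumes "j (j v u) v = v"
  shows "j (j (j (j v u) x) u) v = j (j v x) v"
proof -
  have c_0_5: "(j (j v u) v) = v"
    using assms by (metis ma ja )
  have c_0_8: "(j v (j u v)) = v"
    using assms by (metis c_0_5 ja ma )
  have c_0_10: "\<And>x1 x2 x3 x4. (j x1 (j x2 (j x1 (j x3 (j x1 x4))))) = (j x1 (j x2 (j x3 (j x1 x4))))"
    using assms by (metis ja r2 ma )
  have c_0_11: "\<And>x1. (j v (j u (j v x1))) = (j v x1)"
    using assms by (metis ja c_0_8 ma )
  have c_0_13: "\<And>x1. (j u (j x1 (j u v))) = (j u (j x1 v))"
    using assms by (metis c_0_10 c_0_8 ma ja )
  have c_0_14: "\<And>x1. (j v (j u (j x1 v))) = (j v (j x1 v))"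
    using assms by (metis r2 c_0_11 ma ja )
  show ?thesis using assms by (metis c_0_13 c_0_14 ja ma )
qed
definition lu where "lu x y = j (j (m (m y x) y) x) (m (m y x) y)"

lemma main: "lu (lu x y) (lu y z) = lu x (lu y z)"
proof -
  define u where "u = m (m y x) y"
  define a where "a = lu x y"
  define w where "w = lu y z"
  define v where "v = m (m w x) w"
  have a_def': "a = j (j u x) u" by (simp add: a_def lu_def u_def)
  have w1: "m (m w y) w = w" using A1[where y=z and x=y] by (simp add: w_def lu_def)
  have w2: "m (m y w) y = y" using A2[where x=y and y=z] by (simp add: w_def lu_def)
  have d1: "m (m a x) a = a" using A1[where x=x and y=y] by (simp add: a_def lu_def)
  have d2: "m (m x a) x = x" using A2[where x=x and y=y] by (simp add: a_def lu_def)
  have b0: "m u a = u" "m a u = u" using B0[where x=x and y=y] by (simp_all add: a_def lu_def u_def)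
  have b1: "m (m y a) y = u" using B1[where a=a and x=x and y=y] d1 d2 b0 by (simp add: u_def)
  have dd: "m (m w a) w = v" using D[where w=w and y=y and a=a and x=x] w1 w2 b1 by (simp add: u_def v_def)
  have e1: "m (m u v) u = u" using E1[where w=w and y=y and x=x] w1 w2 by (simp add: u_def v_def)
  have q1: "j (j v u) v = v" using q[where a=u and b=v] e1 by simp
  have f: "j (j (j (j v u) x) u) v = j (j v x) v" using F[where v=v and u=u and x=x] q1 by simp
  have "lu a w = j (j v a) v" using dd by (simp add: lu_def)
  also have "\<dots> = j (j (j (j v u) x) u) v" by (simp add: a_def' ja)
  also have "\<dots> = lu x w" using f by (simp add: lu_def v_def)
  finally show ?thesis by (simp add: a_def w_def)
qed
end

theorem mainTheorem2:
  assumes "skew_lattice S meet join"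
    and "x \<in> S" and "y \<in> S" and "z \<in> S"
  shows "lower_update meet join (lower_update meet join x y) (lower_update meet join y z)
         = lower_update meet join x (lower_update meet join y z)"
proof -
  have cl: "\<And>p q. p \<in> S \<Longrightarrow> q \<in> S \<Longrightarrow> meet p q \<in> S"
    "\<And>p q. p \<in> S \<Longrightarrow> q \<in> S \<Longrightarrow> join p q \<in> S"
    and idm: "\<And>p. p \<in> S \<Longrightarrow> meet p p = p" "\<And>p. p \<in> S \<Longrightarrow> join p p = p"
    and asc: "\<And>p q r. p \<in> S \<Longrightarrow> q \<in> S \<Longrightarrow> r \<in> S \<Longrightarrow> meet (meet p q) r = meet p (meet q r)"
    "\<And>p q r. p \<in> S \<Longrightarrow> q \<in> S \<Longrightarrow> r \<in> S \<Longrightarrow> join (join p q) r = join p (join q r)"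
    and abs: "\<And>p q. p \<in> S \<Longrightarrow> q \<in> S \<Longrightarrow> meet p (join p q) = p"
    "\<And>p q. p \<in> S \<Longrightarrow> q \<in> S \<Longrightarrow> join p (meet p q) = p"
    "\<And>p q. p \<in> S \<Longrightarrow> q \<in> S \<Longrightarrow> join (meet p q) q = q"
    "\<And>p q. p \<in> S \<Longrightarrow> q \<in> S \<Longrightarrow> meet (join p q) q = q"
    using assms(1) unfolding skew_lattice_def by blast+
  define m' where "m' p q = (if p \<in> S \<and> q \<in> S then meet p q else if p \<in> S then p else if q \<in> S then q else p)" for p q
  define j' where "j' p q = (if p \<in> S \<and> q \<in> S then join p q else if p \<in> S then q else if q \<in> S then p else q)" for p q
  interpret skt m' j'
    apply unfold_locales
    unfolding m'_def j'_def
    by (auto simp: cl idm asc abs)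
  have em: "\<And>p q. p \<in> S \<Longrightarrow> q \<in> S \<Longrightarrow> m' p q = meet p q" by (simp add: m'_def)
  have ej: "\<And>p q. p \<in> S \<Longrightarrow> q \<in> S \<Longrightarrow> j' p q = join p q" by (simp add: j'_def)
  have el: "\<And>p q. p \<in> S \<Longrightarrow> q \<in> S \<Longrightarrow> lu p q = lower_update meet join p q \<and> lower_update meet join p q \<in> S"
    by (simp add: lu_def lower_update_def em ej cl)
  show ?thesis using main[of x y z] el assms(2-4) by metis
qed

end
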